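(* Let $n\ge 2$, $\alpha\in(0,1)$ and $\rho\in\{\mathrm{VaR},\mathrm{ES}\}$, and let $\mathbf X=(X_1,\dots,X_n)$ be in $(L^0)^n$ when $\rho=\mathrm{VaR}$ and in $(L^1)^n$ when $\rho=\mathrm{ES}$. Then $\mathrm{DQ}^\rho_\alpha(\mathbf X)=0$ if and only if $\sum_{i=1}^nX_i\le\sum_{i=1}^n\rho_\alpha(X_i)$ almost surely. In particular, if $\sum_{i=1}^nX_i$ is almost surely constant, then $\mathrm{DQ}^{\mathrm{ES}}_\alpha(\mathbf X)=0$, and $\mathrm{DQ}^{\mathrm{VaR}}_\alpha(\mathbf X)=0$ provided $\alpha<1/n$.
   Context: Let $(\Omega,\mathcal F,\mathbb P)$ be an atomless probability space. $L^0$ is the set of all random variables and $L^1$ the set of integrable random variables; a.s. equal random variables are identified. For $\alpha\in[0,1)$ and $X\in L^0$, $\mathrm{VaR}_\alpha(X)=\inf\{x\in\mathbb R:\mathbb P(X\le x)\ge 1-\alpha\}$; in particular $\mathrm{VaR}_0(X)=\operatorname{ess\,sup}X$, possibly $+\infty$. For $\alpha\in(0,1)$ and $X\in L^1$, $\mathrm{ES}_\alpha(X)=\frac1\alpha\int_0^\alpha\mathrm{VaR}_\beta(X)\,\mathrm d\beta$, and $\mathrm{ES}_0(X)=\operatorname{ess\,sup}X$. For $\rho\in\{\mathrm{VaR},\mathrm{ES}\}$, $\alpha\in(0,1)$ and $\mathbf X=(X_1,\dots,X_n)$ (in $(L^0)^n$ when $\rho=\mathrm{VaR}$, in $(L^1)^n$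 when $\rho=\mathrm{ES}$), the diversification quotient is $\mathrm{DQ}^\rho_\alpha(\mathbf X)=\alpha^*/\alpha$, where $\alpha^*=\inf\{\beta\in(0,1):\rho_\beta(\sum_{i=1}^nX_i)\le\sum_{i=1}^n\rho_\alpha(X_i)\}$, with the convention $\inf\emptyset=1$. *)

theory Defs
  imports "HOL-Probability.Probability"
begin

definition atomless :: "'a measure \<Rightarrow> bool" where
  "atomless M \<longleftrightarrow> (\<forall>A\<in>sets M. 0 < measure M A \<longrightarrow>
      (\<exists>B\<in>sets M. B \<subseteq> A \<and> 0 < measure M B \<and> measure M B < measure M A))"

text \<open>Value-at-Risk at level alpha (meaningful for alpha in (0,1), where it is a real number):
  VaR_alpha(X) = inf {x. P(X \<le> x) \<ge> 1 - alpha}.\<close>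
definition VaR :: "'a measure \<Rightarrow> real \<Rightarrow> ('a \<Rightarrow> real) \<Rightarrow> real" where
  "VaR M \<alpha> X = Inf {x. measure M {\<omega> \<in> space M. X \<omega> \<le> x} \<ge> 1 - \<alpha>}"

definition ES :: "'a measure \<Rightarrow> real \<Rightarrow> ('a \<Rightarrow> real) \<Rightarrow> real" where
  "ES M \<alpha> X = (1 / \<alpha>) * (LINT \<beta>:{0<..<\<alpha>}|lborel. VaR M \<beta> X)"

definition DQ :: "(real \<Rightarrow> ('a \<Rightarrow> real) \<Rightarrow> real) \<Rightarrow> real \<Rightarrow> nat \<Rightarrow> (nat \<Rightarrow> 'a \<Rightarrow> real) \<Rightarrow> real" where
  "DQ \<rho> \<alpha> n X =
     (let S = {\<beta> \<in> {0<..<1}. \<rho> \<beta> (\<lambda>\<omega>. \<Sum>i<n. X i \<omega>) \<le> (\<Sum>i<n. \<rho> \<alpha> (X i))}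
      in (if S = {} then 1 else Inf S) / \<alpha>)"

end

theory Submission
  imports Defs
begin

context prob_space begin

lemma F_cdf:
  fixes X :: "'a \<Rightarrow> real"
  assumes [measurable]: "X \<in> borel_measurable M"
  shows "measure M {\<omega> \<in> space M. X \<omega> \<le> x} = cdf (distr M borel X) x"
  unfolding cdf_def by (subst measure_distr) (auto intro!: arg_cong[where f="measure M"])

lemma VaR_nonempty:
  fixes X :: "'a \<Rightarrow> real"
  assumes [measurable]: "X \<in> borel_measurable M" and "0 < \<gamma>"
  shows "\<exists>x. 1 - \<gamma> \<le> measure M {\<omega> \<in> space M. X \<omega> \<le> x}"
proof -
  interpret D: real_distribution "distr M borel X" by simp
  have "eventually (\<lambda>x. cdf (distr M borel X) x > 1 - \<gamma>) at_top"
    using D.cdf_lim_at_top_prob assms(2) by (intro order_tendstoD) auto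
  then obtain x where "cdf (distr M borel X) x > 1 - \<gamma>" using eventually_happens by force
  then show ?thesis using F_cdf[OF assms(1)] by (metis less_imp_le)
qed

lemma VaR_bdd:
  fixes X :: "'a \<Rightarrow> real"
  assumes [measurable]: "X \<in> borel_measurable M" and "\<gamma> < 1"
  shows "bdd_below {x. 1 - \<gamma> \<le> measure M {\<omega> \<in> space M. X \<omega> \<le> x}}"
proof -
  interpret D: real_distribution "distr M borel X" by simp
  have "eventually (\<lambda>x. cdf (distr M borel X) x < 1 - \<gamma>) at_bot"
    using D.cdf_lim_at_bot assms(2) by (intro order_tendstoD) auto
  then obtain b where b: "\<And>x. x \<le> b \<Longrightarrow> cdf (distr M borel X) x < 1 - \<gamma>"
    by (auto simp: eventually_at_bot_linorder)
  show ?thesis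
  proof (rule bdd_belowI[of _ b])
    fix x assume "x \<in> {x. 1 - \<gamma> \<le> measure M {\<omega> \<in> space M. X \<omega> \<le> x}}"
    then show "b \<le> x" using b[of x] F_cdf[OF assms(1), of x] by force
  qed
qed

lemma VaR_le_iff:
  fixes X :: "'a \<Rightarrow> real"
  assumes [measurable]: "X \<in> borel_measurable M" and "0 < \<gamma>" "\<gamma> < 1"
  shows "VaR M \<gamma> X \<le> x \<longleftrightarrow> 1 - \<gamma> \<le> measure M {\<omega> \<in> space M. X \<omega> \<le> x}"
proof -
  interpret D: real_distribution "distr M borel X" by simp
  define F where "F = cdf (distr M borel X)"
  have FF: "\<And>x. measure M {\<omega> \<in> space M. X \<omega> \<le> x} = F x" using F_cdf[OF assms(1)] F_def by simp
  define A where "A = {x. 1 - \<gamma> \<le> F x}"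
  have ne: "A \<noteq> {}" using VaR_nonempty[OF assms(1,2)] by (auto simp: A_def FF)
  have bd: "bdd_below A" using VaR_bdd[OF assms(1,3)] by (simp add: A_def FF)
  have V: "VaR M \<gamma> X = Inf A" unfolding VaR_def A_def FF ..
  have mono: "\<And>x y. x \<le> y \<Longrightarrow> F x \<le> F y" unfolding F_def by (rule D.cdf_nondecreasing)
  show ?thesis
  proof
    assume le: "VaR M \<gamma> X \<le> x"
    let ?q = "Inf A"
    have "\<And>y. y > ?q \<Longrightarrow> 1 - \<gamma> \<le> F y"
    proof -
      fix y assume "y > ?q"
      then obtain z where "z \<in> A" "z < y" using cInf_lessD[OF ne] by blast
      then show "1 - \<gamma> \<le> F y" using mono[of z y] by (auto simp: A_def)
    qed
    moreover have "(F \<longlongrightarrow> F ?q) (at_right ?q)"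
      using D.cdf_is_right_cont[of ?q] unfolding F_def continuous_within by simp
    ultimately have "1 - \<gamma> \<le> F ?q"
      by (intro tendsto_lowerbound[of F "F ?q" "at_right ?q"])
         (auto simp: eventually_at_right_less eventually_at_right_field intro: exI[of _ "?q+1"])
    then show "1 - \<gamma> \<le> measure M {\<omega> \<in> space M. X \<omega> \<le> x}"
      using mono[of ?q x] le V FF by simp
  next
    assume "1 - \<gamma> \<le> measure M {\<omega> \<in> space M. X \<omega> \<le> x}"
    then have "x \<in> A" by (simp add: A_def FF)
    then show "VaR M \<gamma> X \<le> x" using V cInf_lower[OF _ bd] by simp
  qed
qed

lemma VaR_antimono:
  fixes X :: "'a \<Rightarrow> real"
  assumes [measurable]: "X \<in> borel_measurable M" and "0 < \<gamma>" "\<gamma> \<le> \<delta>" "\<delta> < 1"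
  shows "VaR M \<delta> X \<le> VaR M \<gamma> X"
proof -
  have "1 - \<gamma> \<le> measure M {\<omega> \<in> space M. X \<omega> \<le> VaR M \<gamma> X}"
    using VaR_le_iff[OF assms(1,2), of "VaR M \<gamma> X"] assms by simp
  then show ?thesis using VaR_le_iff[OF assms(1), of \<delta> "VaR M \<gamma> X"] assms by simp
qed


lemma VaR_measurable:
  fixes X :: "'a \<Rightarrow> real"
  assumes [measurable]: "X \<in> borel_measurable M"
  shows "(\<lambda>\<gamma>. if \<gamma> \<in> {0<..<1} then VaR M \<gamma> X else 0) \<in> borel_measurable borel"
proof -
  have "mono_on {0<..<1::real} (\<lambda>\<gamma>. - VaR M \<gamma> X)"
    by (rule mono_onI) (auto intro!: VaR_antimono)
  then have "(\<lambda>\<gamma>. - VaR M \<gamma> X) \<in> borel_measurable (restrict_space borel {0<..<1})"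
    by (rule borel_measurable_mono_on_fnc)
  then have "(\<lambda>\<gamma>. if \<gamma> \<in> {0<..<1} then - VaR M \<gamma> X else 0) \<in> borel_measurable borel"
    by (subst (asm) measurable_restrict_space_iff[where c=0]) auto
  then have "(\<lambda>\<gamma>. - (if \<gamma> \<in> {0<..<1} then - VaR M \<gamma> X else 0)) \<in> borel_measurable borel"
    by measurable
  then show ?thesis by (simp add: if_distrib cong: if_cong)
qed

lemma VaR_integral:
  fixes X :: "'a \<Rightarrow> real"
  assumes X: "integrable M X"
  shows "set_integrable lborel {0<..<1} (\<lambda>\<gamma>. VaR M \<gamma> X)"
    and "(LINT \<gamma>:{0<..<1}|lborel. VaR M \<gamma> X) = expectation X"
proof -
  have Xm[measurable]: "X \<in> borel_measurable M" using X by auto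
  define Q where "Q = (\<lambda>\<gamma>::real. if \<gamma> \<in> {0<..<1} then VaR M \<gamma> X else 0)"
  have Qm[measurable]: "Q \<in> borel_measurable borel" unfolding Q_def by (rule VaR_measurable[OF Xm])
  define g where "g = (indicator {0<..<1} :: real \<Rightarrow> real)"
  have gm[measurable]: "g \<in> borel_measurable lborel" unfolding g_def by simp
  define N where "N = density lborel (\<lambda>x. ennreal (g x))"
  have gi: "(\<lambda>x. ennreal (g x)) = indicator {0<..<1}" unfolding g_def by (auto simp: fun_eq_iff indicator_def)
  have embN: "\<And>A. A \<in> sets borel \<Longrightarrow> emeasure N A = emeasure lborel ({0<..<1} \<inter> A)"
    unfolding N_def gi by (subst emeasure_restricted) auto
  have spN: "space N = UNIV" and setsN: "sets N = sets borel" unfolding N_def by auto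
  have PN: "prob_space N"
    by (rule prob_spaceI) (simp add: spN embN)
  interpret N: prob_space N by (rule PN)
  have Qm'[measurable]: "Q \<in> borel_measurable N" using Qm by (simp add: measurable_def spN setsN)
  interpret DX: real_distribution "distr M borel X" by simp
  interpret DQ: real_distribution "distr N borel Q" by (rule N.real_distribution_distr) simp
  define F where "F = cdf (distr M borel X)"
  have FF: "\<And>x. measure M {\<omega> \<in> space M. X \<omega> \<le> x} = F x" using F_cdf[OF Xm] F_def by simp
  have "cdf (distr N borel Q) = F"
  proof
    fix x
    have "cdf (distr N borel Q) x = measure N (Q -` {..x} \<inter> space N)"
      unfolding cdf_def by (subst measure_distr) auto
    also have "\<dots> = measure lborel ({0<..<1} \<inter> (Q -` {..x}))"
      using measurable_sets[OF Qm, of "{..x}"]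
      unfolding measure_def by (subst embN) (auto simp: spN)
    also have "{0<..<1} \<inter> (Q -` {..x}) = {0<..<1} \<inter> {1 - F x ..}"
      using VaR_le_iff[OF Xm] by (auto simp: Q_def FF)
    also have "measure lborel \<dots> = F x"
    proof (cases "F x = 1")
      case True
      then have "{0<..<1} \<inter> {1 - F x ..} = {0<..<(1::real)}" by auto
      then show ?thesis using True by simp
    next
      case False
      have "F x \<le> 1" "0 \<le> F x" unfolding F_def using DX.cdf_bounded_prob DX.cdf_nonneg by auto
      then have "{0<..<1} \<inter> {1 - F x ..} = {1 - F x..<1}" using False by auto
      then show ?thesis using \<open>0 \<le> F x\<close> by simp
    qed
    finally show "cdf (distr N borel Q) x = F x" .
  qed
  then have eqd: "distr N borel Q = distr M borel X"
    unfolding F_def by (intro cdf_unique) auto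
  have "integrable N Q \<longleftrightarrow> integrable (distr N borel Q) (\<lambda>x. x)"
    by (subst integrable_distr_eq) auto
  also have "\<dots> \<longleftrightarrow> integrable M X" unfolding eqd
    by (subst integrable_distr_eq) auto
  finally have iQ: "integrable N Q" using X by simp
  have "integral\<^sup>L N Q = integral\<^sup>L (distr N borel Q) (\<lambda>x. x)"
    by (subst integral_distr) auto
  also have "\<dots> = expectation X" unfolding eqd
    by (subst integral_distr) auto
  finally have EQ: "integral\<^sup>L N Q = expectation X" .
  have eqf: "(\<lambda>\<gamma>. g \<gamma> * Q \<gamma>) = (\<lambda>\<gamma>. indicator {0<..<1} \<gamma> * VaR M \<gamma> X)"
    by (auto simp: fun_eq_iff g_def Q_def indicator_def)
  have gnn: "AE x in lborel. 0 \<le> g x" by (simp add: g_def)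
  show "set_integrable lborel {0<..<1} (\<lambda>\<gamma>. VaR M \<gamma> X)"
    using iQ unfolding set_integrable_def N_def
    by (subst (asm) integrable_density[OF _ gm gnn]) (auto simp: eqf)
  show "(LINT \<gamma>:{0<..<1}|lborel. VaR M \<gamma> X) = expectation X"
    using EQ unfolding set_lebesgue_integral_def N_def
    by (subst (asm) integral_density[OF _ gm gnn]) (auto simp: eqf)
qed


lemma ES_props:
  fixes X :: "'a \<Rightarrow> real"
  assumes X: "integrable M X" and b: "0 < \<beta>" "\<beta> < 1"
  shows "VaR M \<beta> X \<le> ES M \<beta> X" and "expectation X \<le> ES M \<beta> X"
    and "(\<And>\<gamma>. 0 < \<gamma> \<Longrightarrow> \<gamma> < 1 \<Longrightarrow> VaR M \<gamma> X \<le> c) \<Longrightarrow> ES M \<beta> X \<le> c"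
proof -
  have Xm[measurable]: "X \<in> borel_measurable M" using X by auto
  note I = VaR_integral[OF X]
  have i1: "set_integrable lborel {0<..<\<beta>} (\<lambda>\<gamma>. VaR M \<gamma> X)"
    by (rule set_integrable_subset[OF I(1)]) (use b in auto)
  have i2: "set_integrable lborel {\<beta>..<1} (\<lambda>\<gamma>. VaR M \<gamma> X)"
    by (rule set_integrable_subset[OF I(1)]) (use b in auto)
  define v where "v = VaR M \<beta> X"
  define I1 where "I1 = (LINT \<gamma>:{0<..<\<beta>}|lborel. VaR M \<gamma> X)"
  define I2 where "I2 = (LINT \<gamma>:{\<beta>..<1}|lborel. VaR M \<gamma> X)"
  have ES: "ES M \<beta> X = I1 / \<beta>" unfolding ES_def I1_def by simp
  have c1: "set_integrable lborel {0<..<\<beta>} (\<lambda>\<gamma>. v)"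
    unfolding set_integrable_def by (intro integrable_scaleR_left integrable_real_indicator) (use b in auto)
  have c2: "set_integrable lborel {\<beta>..<1} (\<lambda>\<gamma>. v)"
    unfolding set_integrable_def by (intro integrable_scaleR_left integrable_real_indicator) (use b in auto)
  have "(LINT \<gamma>:{0<..<\<beta>}|lborel. v) \<le> I1"
    unfolding I1_def v_def
    by (rule set_integral_mono[OF c1[unfolded v_def] i1]) (use b in \<open>auto intro!: VaR_antimono\<close>)
  then have I1v: "\<beta> * v \<le> I1" using b by (simp add: set_integral_const)
  have "I2 \<le> (LINT \<gamma>:{\<beta>..<1}|lborel. v)"
    unfolding I2_def v_def
    by (rule set_integral_mono[OF i2 c2[unfolded v_def]]) (use b in \<open>auto intro!: VaR_antimono\<close>)
  then have I2v: "I2 \<le> (1 - \<beta>) * v" using b by (simp add: set_integral_const)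
  have "{0<..<1} = {0<..<\<beta>} \<union> {\<beta>..<(1::real)}" using b by auto
  then have "expectation X = I1 + I2" unfolding I(2)[symmetric] I1_def I2_def
    by (simp only:) (rule set_integral_Un[OF _ i1 i2], auto)
  show "VaR M \<beta> X \<le> ES M \<beta> X" using I1v b unfolding ES v_def by (simp add: field_simps)
  have "(1 - \<beta>) * (\<beta> * v) \<le> (1 - \<beta>) * I1" using I1v b by (intro mult_left_mono) auto
  moreover have "\<beta> * I2 \<le> \<beta> * ((1 - \<beta>) * v)" using I2v b by (intro mult_left_mono) auto
  ultimately show "expectation X \<le> ES M \<beta> X"
    using \<open>expectation X = I1 + I2\<close> b unfolding ES by (simp add: field_simps)
  assume H: "\<And>\<gamma>. 0 < \<gamma> \<Longrightarrow> \<gamma> < 1 \<Longrightarrow> VaR M \<gamma> X \<le> c"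
  have c3: "set_integrable lborel {0<..<\<beta>} (\<lambda>\<gamma>. c)"
    unfolding set_integrable_def by (intro integrable_scaleR_left integrable_real_indicator) (use b in auto)
  have "I1 \<le> (LINT \<gamma>:{0<..<\<beta>}|lborel. c)"
    unfolding I1_def
    by (rule set_integral_mono[OF i1 c3]) (use b in \<open>auto intro!: H\<close>)
  then have "I1 \<le> \<beta> * c" using b by (simp add: set_integral_const)
  then show "ES M \<beta> X \<le> c" using b unfolding ES by (simp add: field_simps)
qed


lemma VaR_small_AE:
  fixes Y :: "'a \<Rightarrow> real"
  assumes [measurable]: "Y \<in> borel_measurable M"
    and H: "\<And>\<epsilon>. \<epsilon> > 0 \<Longrightarrow> \<exists>\<beta>. 0 < \<beta> \<and> \<beta> < 1 \<and> \<beta> < \<epsilon> \<and> VaR M \<beta> Y \<le> c"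
  shows "AE \<omega> in M. Y \<omega> \<le> c"
proof -
  have P1: "\<And>\<epsilon>. \<epsilon> > 0 \<Longrightarrow> 1 - \<epsilon> \<le> prob {\<omega> \<in> space M. Y \<omega> \<le> c}"
  proof -
    fix \<epsilon> :: real assume "\<epsilon> > 0"
    then obtain \<beta> where "0 < \<beta>" "\<beta> < 1" "\<beta> < \<epsilon>" "VaR M \<beta> Y \<le> c" using H by blast
    then show "1 - \<epsilon> \<le> prob {\<omega> \<in> space M. Y \<omega> \<le> c}" using VaR_le_iff[of Y \<beta> c] by auto
  qed
  have "1 \<le> prob {\<omega> \<in> space M. Y \<omega> \<le> c}"
  proof (rule field_le_epsilon)
    fix e :: real assume "0 < e"
    then show "1 \<le> prob {\<omega> \<in> space M. Y \<omega> \<le> c} + e" using P1[of e] by simp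
  qed
  then have "prob {\<omega> \<in> space M. Y \<omega> \<le> c} = 1" using prob_le_1 by (meson antisym)
  then show ?thesis by (subst (asm) prob_Collect_eq_1) auto
qed

lemma AE_VaR_le:
  fixes Y :: "'a \<Rightarrow> real"
  assumes [measurable]: "Y \<in> borel_measurable M"
    and "AE \<omega> in M. Y \<omega> \<le> c" and "0 < \<gamma>" "\<gamma> < 1"
  shows "VaR M \<gamma> Y \<le> c"
proof -
  have "prob {\<omega> \<in> space M. Y \<omega> \<le> c} = 1" using assms(2) by (subst prob_Collect_eq_1) auto
  then show ?thesis using VaR_le_iff[of Y \<gamma> c] assms by simp
qed

end

lemma DQ_zero_iff:
  assumes "0 < \<alpha>"
  shows "DQ \<rho> \<alpha> n X = 0 \<longleftrightarrow>
    (\<forall>\<epsilon>>0. \<exists>\<beta>. 0 < \<beta> \<and> \<beta> < 1 \<and> \<beta> < \<epsilon> \<and> \<rho> \<beta> (\<lambda>\<omega>. \<Sum>i<n. X i \<omega>) \<le> (\<Sum>i<n. \<rho> \<alpha> (X i)))"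
proof -
  define S where "S = {\<beta> \<in> {0<..<1}. \<rho> \<beta> (\<lambda>\<omega>. \<Sum>i<n. X i \<omega>) \<le> (\<Sum>i<n. \<rho> \<alpha> (X i))}"
  have D: "DQ \<rho> \<alpha> n X = (if S = {} then 1 else Inf S) / \<alpha>" unfolding DQ_def S_def Let_def ..
  have bd: "bdd_below S" unfolding S_def by (auto intro: bdd_belowI[of _ 0])
  have "DQ \<rho> \<alpha> n X = 0 \<longleftrightarrow> S \<noteq> {} \<and> Inf S = 0" using assms by (simp add: D)
  also have "\<dots> \<longleftrightarrow> (\<forall>\<epsilon>>0. \<exists>\<beta>\<in>S. \<beta> < \<epsilon>)"
  proof
    assume "S \<noteq> {} \<and> Inf S = 0"
    then show "\<forall>\<epsilon>>0. \<exists>\<beta>\<in>S. \<beta> < \<epsilon>" using cInf_lessD[of S] by simp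
  next
    assume H: "\<forall>\<epsilon>>0. \<exists>\<beta>\<in>S. \<beta> < \<epsilon>"
    have "\<exists>\<beta>\<in>S. \<beta> < 1" using H by simp
    then have ne: "S \<noteq> {}" by auto
    have ge: "0 \<le> Inf S" using ne by (intro cInf_greatest) (auto simp: S_def)
    have "\<not> Inf S > 0"
    proof
      assume "Inf S > 0"
      then obtain \<beta> where "\<beta> \<in> S" "\<beta> < Inf S" using H by auto
      then show False using cInf_lower[OF _ bd] by (meson not_le)
    qed
    then show "S \<noteq> {} \<and> Inf S = 0" using ne ge by auto
  qed
  finally show ?thesis unfolding S_def by auto
qed


theorem theorem1:
  fixes M :: "'a measure" and n :: nat and \<alpha> :: real and X :: "nat \<Rightarrow> 'a \<Rightarrow> real"
  assumes "prob_space M" and "atomless M"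
    and "n \<ge> 2" and "0 < \<alpha>" and "\<alpha> < 1"
  shows
    "((\<forall>i<n. X i \<in> borel_measurable M) \<longrightarrow>
        (DQ (VaR M) \<alpha> n X = 0 \<longleftrightarrow>
         (AE \<omega> in M. (\<Sum>i<n. X i \<omega>) \<le> (\<Sum>i<n. VaR M \<alpha> (X i)))))
   \<and> ((\<forall>i<n. integrable M (X i)) \<longrightarrow>
        (DQ (ES M) \<alpha> n X = 0 \<longleftrightarrow>
         (AE \<omega> in M. (\<Sum>i<n. X i \<omega>) \<le> (\<Sum>i<n. ES M \<alpha> (X i)))))
   \<and> (\<forall>c. (\<forall>i<n. integrable M (X i)) \<and> (AE \<omega> in M. (\<Sum>i<n. X i \<omega>) = c) \<longrightarrow>
        DQ (ES M) \<alpha> n X = 0)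
   \<and> (\<forall>c. (\<forall>i<n. X i \<in> borel_measurable M) \<and> (AE \<omega> in M. (\<Sum>i<n. X i \<omega>) = c)
          \<and> \<alpha> < 1 / real n \<longrightarrow>
        DQ (VaR M) \<alpha> n X = 0)"
proof -
  interpret prob_space M by fact
  define Y where "Y = (\<lambda>\<omega>. \<Sum>i<n. X i \<omega>)"
  have Yapp: "\<And>\<omega>. (\<Sum>i<n. X i \<omega>) = Y \<omega>" by (simp add: Y_def)
  have P1: "DQ (VaR M) \<alpha> n X = 0 \<longleftrightarrow> (AE \<omega> in M. (\<Sum>i<n. X i \<omega>) \<le> (\<Sum>i<n. VaR M \<alpha> (X i)))"
    if Xm: "\<forall>i<n. X i \<in> borel_measurable M"
  proof -
    have Ym: "Y \<in> borel_measurable M" unfolding Y_def using Xm by (intro borel_measurable_sum) auto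
    show ?thesis unfolding DQ_zero_iff[OF assms(4)] Yapp
    proof
      assume "\<forall>\<epsilon>>0. \<exists>\<beta>>0. \<beta> < 1 \<and> \<beta> < \<epsilon> \<and> VaR M \<beta> Y \<le> (\<Sum>i<n. VaR M \<alpha> (X i))"
      then show "AE \<omega> in M. Y \<omega> \<le> (\<Sum>i<n. VaR M \<alpha> (X i))"
        by (intro VaR_small_AE[OF Ym]) auto
    next
      assume A: "AE \<omega> in M. Y \<omega> \<le> (\<Sum>i<n. VaR M \<alpha> (X i))"
      show "\<forall>\<epsilon>>0. \<exists>\<beta>>0. \<beta> < 1 \<and> \<beta> < \<epsilon> \<and> VaR M \<beta> Y \<le> (\<Sum>i<n. VaR M \<alpha> (X i))"
      proof (intro allI impI)
        fix \<epsilon> :: real assume "\<epsilon> > 0"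
        then show "\<exists>\<beta>>0. \<beta> < 1 \<and> \<beta> < \<epsilon> \<and> VaR M \<beta> Y \<le> (\<Sum>i<n. VaR M \<alpha> (X i))"
          by (intro exI[of _ "min (\<epsilon>/2) (1/2)"]) (auto intro!: AE_VaR_le[OF Ym A])
      qed
    qed
  qed
  have P2: "DQ (ES M) \<alpha> n X = 0 \<longleftrightarrow> (AE \<omega> in M. (\<Sum>i<n. X i \<omega>) \<le> (\<Sum>i<n. ES M \<alpha> (X i)))"
    if Xi: "\<forall>i<n. integrable M (X i)"
  proof -
    have Yi: "integrable M Y" unfolding Y_def using Xi by (intro Bochner_Integration.integrable_sum[where I="{..<n}" and f=X]) auto
    then have Ym: "Y \<in> borel_measurable M" by auto
    show ?thesis unfolding DQ_zero_iff[OF assms(4)] Yapp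
    proof
      assume H: "\<forall>\<epsilon>>0. \<exists>\<beta>>0. \<beta> < 1 \<and> \<beta> < \<epsilon> \<and> ES M \<beta> Y \<le> (\<Sum>i<n. ES M \<alpha> (X i))"
      show "AE \<omega> in M. Y \<omega> \<le> (\<Sum>i<n. ES M \<alpha> (X i))"
      proof (rule VaR_small_AE[OF Ym])
        fix \<epsilon> :: real assume "\<epsilon> > 0"
        then obtain \<beta> where b: "0 < \<beta>" "\<beta> < 1" "\<beta> < \<epsilon>" "ES M \<beta> Y \<le> (\<Sum>i<n. ES M \<alpha> (X i))"
          using H by blast
        then show "\<exists>\<beta>>0. \<beta> < 1 \<and> \<beta> < \<epsilon> \<and> VaR M \<beta> Y \<le> (\<Sum>i<n. ES M \<alpha> (X i))"
          using ES_props(1)[OF Yi b(1,2)] by (intro exI[of _ \<beta>]) auto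
      qed
    next
      assume A: "AE \<omega> in M. Y \<omega> \<le> (\<Sum>i<n. ES M \<alpha> (X i))"
      show "\<forall>\<epsilon>>0. \<exists>\<beta>>0. \<beta> < 1 \<and> \<beta> < \<epsilon> \<and> ES M \<beta> Y \<le> (\<Sum>i<n. ES M \<alpha> (X i))"
      proof (intro allI impI)
        fix \<epsilon> :: real assume "\<epsilon> > 0"
        then show "\<exists>\<beta>>0. \<beta> < 1 \<and> \<beta> < \<epsilon> \<and> ES M \<beta> Y \<le> (\<Sum>i<n. ES M \<alpha> (X i))"
          by (intro exI[of _ "min (\<epsilon>/2) (1/2)"])
             (auto intro!: ES_props(3)[OF Yi] AE_VaR_le[OF Ym A])
      qed
    qed
  qed
  have P3: "DQ (ES M) \<alpha> n X = 0"
    if Xi: "\<forall>i<n. integrable M (X i)" and C: "AE \<omega> in M. (\<Sum>i<n. X i \<omega>) = c" for c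
  proof -
    have "expectation Y = expectation (\<lambda>_. c)"
      using C unfolding Y_def by (intro integral_cong_AE) (use Xi in \<open>auto intro!: borel_measurable_sum borel_measurable_integrable\<close>)
    then have "c = expectation Y" by (simp add: prob_space)
    also have "\<dots> = (\<Sum>i<n. expectation (X i))" unfolding Y_def using Xi by (intro Bochner_Integration.integral_sum[where I="{..<n}" and f=X]) auto
    also have "\<dots> \<le> (\<Sum>i<n. ES M \<alpha> (X i))"
      using Xi assms(4,5) by (intro sum_mono ES_props(2)) auto
    finally have cle: "c \<le> (\<Sum>i<n. ES M \<alpha> (X i))" .
    have "AE \<omega> in M. (\<Sum>i<n. X i \<omega>) \<le> (\<Sum>i<n. ES M \<alpha> (X i))"
      using C by (rule AE_mp[OF _ AE_I2]) (use cle in simp)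
    then show ?thesis using P2 Xi by simp
  qed
  have P4: "DQ (VaR M) \<alpha> n X = 0"
    if Xm: "\<forall>i<n. X i \<in> borel_measurable M" and C: "AE \<omega> in M. (\<Sum>i<n. X i \<omega>) = c"
      and al: "\<alpha> < 1 / real n" for c
  proof -
    define q where "q = (\<lambda>i. VaR M \<alpha> (X i))"
    have Xm': "\<And>i. i \<in> {..<n} \<Longrightarrow> X i \<in> borel_measurable M" using Xm by auto
    have Ym: "Y \<in> borel_measurable M" unfolding Y_def using Xm by (intro borel_measurable_sum) auto
    have npos: "real n > 0" using assms(3) by simp
    have "c \<le> (\<Sum>i<n. q i)"
    proof (rule ccontr)
      assume "\<not> c \<le> (\<Sum>i<n. q i)"
      then have lt: "(\<Sum>i<n. q i) < c" by simp
      define e where "e = (c - (\<Sum>i<n. q i)) / (2 * real n)"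
      have epos: "e > 0" unfolding e_def using lt npos by simp
      define A where "A = (\<lambda>i. {\<omega> \<in> space M. q i + e < X i \<omega>})"
      have Aev: "A i \<in> events" if "i < n" for i
      proof -
        have [measurable]: "X i \<in> borel_measurable M" using Xm that by auto
        show ?thesis unfolding A_def by measurable
      qed
      have pA: "prob (A i) \<le> \<alpha>" if "i < n" for i
      proof -
        have m[measurable]: "X i \<in> borel_measurable M" using Xm that by auto
        have "VaR M \<alpha> (X i) \<le> q i + e" using epos q_def by simp
        then have "1 - \<alpha> \<le> prob {\<omega> \<in> space M. X i \<omega> \<le> q i + e}"
          using VaR_le_iff[OF m assms(4,5)] by simp
        moreover have "prob (A i) = 1 - prob {\<omega> \<in> space M. X i \<omega> \<le> q i + e}"
          unfolding A_def using prob_neg[of "\<lambda>\<omega>. X i \<omega> \<le> q i + e"] by (simp add: not_le)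
        ultimately show ?thesis by simp
      qed
      have sub: "{\<omega> \<in> space M. Y \<omega> = c} \<subseteq> (\<Union>i\<in>{..<n}. A i)"
      proof
        fix \<omega> assume w: "\<omega> \<in> {\<omega> \<in> space M. Y \<omega> = c}"
        show "\<omega> \<in> (\<Union>i\<in>{..<n}. A i)"
        proof (rule ccontr)
          assume "\<omega> \<notin> (\<Union>i\<in>{..<n}. A i)"
          then have "\<And>i. i < n \<Longrightarrow> X i \<omega> \<le> q i + e" using w by (auto simp: A_def not_less)
          then have "Y \<omega> \<le> (\<Sum>i<n. q i + e)" unfolding Y_def by (intro sum_mono) auto
          also have "\<dots> = (\<Sum>i<n. q i) + real n * e" by (simp add: sum.distrib)
          also have "\<dots> < c" using lt npos unfolding e_def by (simp add: field_simps)
          finally show False using w by simp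
        qed
      qed
      have P1: "prob {\<omega> \<in> space M. Y \<omega> = c} = 1"
        using C unfolding Yapp by (subst prob_Collect_eq_1) (use Ym in auto)
      have "1 = prob {\<omega> \<in> space M. Y \<omega> = c}" using P1 by simp
      also have "\<dots> \<le> prob (\<Union>i\<in>{..<n}. A i)"
        using sub Aev by (intro finite_measure_mono) auto
      also have "\<dots> \<le> (\<Sum>i<n. prob (A i))"
        using Aev by (intro measure_subadditive_finite) (auto simp: emeasure_eq_measure)
      also have "\<dots> \<le> (\<Sum>i<n. \<alpha>)" using pA by (intro sum_mono) auto
      also have "\<dots> = real n * \<alpha>" by simp
      also have "\<dots> < 1" using al npos by (simp add: field_simps)
      finally show False by simp
    qed
    then have cle: "c \<le> (\<Sum>i<n. VaR M \<alpha> (X i))" unfolding q_def .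
    have "AE \<omega> in M. (\<Sum>i<n. X i \<omega>) \<le> (\<Sum>i<n. VaR M \<alpha> (X i))"
      using C by (rule AE_mp[OF _ AE_I2]) (use cle in simp)
    then show ?thesis using P1 Xm by simp
  qed
  show ?thesis using P1 P2 P3 P4 by blast
qed

end
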